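(* Let $i$ be an index with $0\leq i<k$. An element $\lambda_t$ with $t>s$ is an order-$i$ seed of $\tilde\Lambda$ if and only if one of the following pairwise excluding conditions holds: (1) $\lambda_t$ is an order-$i$ seed of $\Lambda$; (2) $i<k-1$, $\lambda_t=\lambda_s+\lambda_{i+1}-\lambda_i$ and $\lambda_s$ is an order-$(i+1)$ seed of $\Lambda$; (3) $i=k-1=s-2$ and $\lambda_t=\lambda_s+\lambda_k-\lambda_{k-1}$; (4) $i=k-1=s-1$ and either $\lambda_t=\lambda_s+\lambda_k-\lambda_{k-1}$ or $\lambda_t=\lambda_s+\lambda_k-\lambda_{k-1}+1$.
   Context: A numerical semigroup is a subset $\Lambda\subseteq\mathbb{N}_0$ containing $0$, closed under addition, with finite complement; its genus $g$ is the number of gaps (elements of $\mathbb{N}_0\setminus\Lambda$). Write $\Lambda=\{\lambda_i\}_{i\geq 0}$ with $0=\lambda_0<\lambda_1<\lambda_2<\cdots$; let $k$ be the smallest index with $\lambda_i=i+g$ for all $i\geq k$, and $c=\lambda_k=k+g$ the conductor. A generator of a numerical semigroup is a non-zero element that is not the sum of two non-zero elements of it. For $i\geq 0$ let $\Lambda_i=\Lambda\setminus\{\lambda_1,\dots,\lambda_i\}$. An element $\lambda_t$ with $t\geq k$ is an order-$i$ seed of $\Lambda$ (for $0\leq i<k$) if $\lambda_t+\lambda_i$ is a generator of $\Lambda_i$. Fix an order-zero seed $\lambda_s$ of $\Lambda$ (so $s\geq k$ and $\lambda_s$ is a generator of $\Lambda$), and let $\tilde\Lambda=\Lambda\setminus\{\lambda_s\}$,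 a numerical semigroup of genus $g+1$ with elements $\tilde\lambda_i=\lambda_i$ for $i<s$, $\tilde\lambda_i=\lambda_{i+1}$ for $i\geq s$, and conductor $\lambda_s+1$. Thus an order-$i$ seed of $\tilde\Lambda$, with $0\leq i<s$, is an element $\lambda_t$ with $t>s$ such that $\lambda_t+\lambda_i$ is a generator of $\tilde\Lambda_i=\Lambda\setminus\{\lambda_1,\dots,\lambda_i,\lambda_s\}$. *)

theory Defs
  imports Main "HOL-Library.Infinite_Set"
begin

definition numerical_semigroup :: "nat set \<Rightarrow> bool" where
  "numerical_semigroup L \<longleftrightarrow> 0 \<in> L \<and> (\<forall>x\<in>L. \<forall>y\<in>L. x + y \<in> L) \<and> finite (UNIV - L)"

definition lam :: "nat set \<Rightarrow> nat \<Rightarrow> nat" where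
  "lam L i = enumerate L i"

definition genus :: "nat set \<Rightarrow> nat" where
  "genus L = card (UNIV - L)"

definition kidx :: "nat set \<Rightarrow> nat" where
  "kidx L = (LEAST k. \<forall>i\<ge>k. lam L i = i + genus L)"

definition conductor :: "nat set \<Rightarrow> nat" where
  "conductor L = lam L (kidx L)"

definition is_generator :: "nat set \<Rightarrow> nat \<Rightarrow> bool" where
  "is_generator L x \<longleftrightarrow> x \<in> L \<and> x \<noteq> 0 \<and>
     \<not> (\<exists>a\<in>L. \<exists>b\<in>L. a \<noteq> 0 \<and> b \<noteq> 0 \<and> a + b = x)"

definition Lsub :: "nat set \<Rightarrow> nat \<Rightarrow> nat set" where
  "Lsub L i = L - {lam L j | j. 1 \<le> j \<and> j \<le> i}"

definition order_seed :: "nat set \<Rightarrow> nat \<Rightarrow> nat \<Rightarrow> bool" where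
  "order_seed L i x \<longleftrightarrow> i < kidx L \<and> (\<exists>t\<ge>kidx L. x = lam L t) \<and>
     is_generator (Lsub L i) (x + lam L i)"

end

theory Submission
  imports Defs
begin

lemma ns_inf: "numerical_semigroup L \<Longrightarrow> infinite L"
proof
  assume ns: "numerical_semigroup L" and f: "finite L"
  have "finite (UNIV - L)" using ns by (simp add: numerical_semigroup_def)
  with f have "finite (L \<union> (UNIV - L))" by simp
  then show False by simp
qed

lemma enum_count:
  fixes S :: "nat set"
  assumes "infinite S"
  shows "card (S \<inter> {..<enumerate S n}) = n"
proof -
  have "S \<inter> {..<enumerate S n} = enumerate S ` {..<n}"
  proof
    show "S \<inter> {..<enumerate S n} \<subseteq> enumerate S ` {..<n}"
    proof
      fix y assume y: "y \<in> S \<inter> {..<enumerate S n}"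
      then have "y \<in> range (enumerate S)" using range_enumerate[OF assms] by auto
      then obtain m where m: "y = enumerate S m" by auto
      then have "m < n" using y assms by auto
      then show "y \<in> enumerate S ` {..<n}" using m by auto
    qed
    show "enumerate S ` {..<n} \<subseteq> S \<inter> {..<enumerate S n}"
      using assms enumerate_in_set by auto
  qed
  moreover have "inj (enumerate S)" using inj_enumerate assms by blast
  ultimately show ?thesis by (simp add: card_image inj_on_subset)
qed

lemma enum_eqI:
  fixes S :: "nat set"
  assumes "infinite S" "x \<in> S" "card (S \<inter> {..<x}) = n"
  shows "enumerate S n = x"
proof -
  have "x \<in> range (enumerate S)" using range_enumerate[OF assms(1)] assms(2) by auto
  then obtain m where m: "x = enumerate S m" by auto
  then have "m = n" using enum_count[OF assms(1), of m] assms(3) by simp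
  then show ?thesis using m by simp
qed

lemma ns_tail: assumes ns: "numerical_semigroup L"
  shows "\<exists>K. \<forall>j\<ge>K. lam L j = j + genus L"
proof -
  define G where "G = UNIV - L"
  have fG: "finite G" using ns by (simp add: numerical_semigroup_def G_def)
  then obtain M where M: "G \<subseteq> {..<M}" using finite_nat_iff_bounded by blast
  have inf: "infinite L" using ns_inf[OF ns] .
  have "\<forall>j\<ge>M. lam L j = j + genus L"
  proof (intro allI impI)
    fix j assume j: "M \<le> j"
    define x where "x = j + genus L"
    have gG: "genus L = card G" by (simp add: genus_def G_def)
    have GM: "card G \<le> M" using card_mono[OF _ M] by simp
    have xM: "x \<ge> M" using j x_def by simp
    have "x \<in> L" using M xM G_def by auto
    have un: "{..<x} = (L \<inter> {..<x}) \<union> G" using M xM G_def by auto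
    have e: "card {..<x} = card (L \<inter> {..<x} \<union> G)" by (rule arg_cong[OF un])
    have "card (L \<inter> {..<x} \<union> G) = card (L \<inter> {..<x}) + card G"
      by (rule card_Un_disjoint) (use fG G_def in auto)
    with e have "card {..<x} = card (L \<inter> {..<x}) + card G" by simp
    then have "card (L \<inter> {..<x}) = j" using x_def gG by simp
    then show "lam L j = j + genus L"
      using enum_eqI[OF inf \<open>x \<in> L\<close>] x_def lam_def by simp
  qed
  then show ?thesis by blast
qed

lemma kidx_prop: "numerical_semigroup L \<Longrightarrow> kidx L \<le> j \<Longrightarrow> lam L j = j + genus L"
  unfolding kidx_def using LeastI_ex[OF ns_tail] by blast

lemma lam_less_iff: "numerical_semigroup L \<Longrightarrow> lam L m < lam L n \<longleftrightarrow> m < n"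
  unfolding lam_def using ns_inf by simp

lemma lam_le_iff: "numerical_semigroup L \<Longrightarrow> lam L m \<le> lam L n \<longleftrightarrow> m \<le> n"
  unfolding lam_def using ns_inf by simp

lemma lam_eq_iff: "numerical_semigroup L \<Longrightarrow> lam L m = lam L n \<longleftrightarrow> m = n"
  by (metis lam_le_iff le_antisym order_refl)

lemma lam_in: "numerical_semigroup L \<Longrightarrow> lam L m \<in> L"
  unfolding lam_def using ns_inf enumerate_in_set by blast

lemma lam_surj: "numerical_semigroup L \<Longrightarrow> x \<in> L \<Longrightarrow> \<exists>m. x = lam L m"
  unfolding lam_def using ns_inf range_enumerate by (metis rangeE)

lemma lam0: "numerical_semigroup L \<Longrightarrow> lam L 0 = 0"
  unfolding lam_def enumerate_0 numerical_semigroup_def by (auto intro: Least_equality)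

lemma betw: "numerical_semigroup L \<Longrightarrow> a \<in> L \<Longrightarrow> lam L i < a \<Longrightarrow> lam L (Suc i) \<le> a"
  by (metis Suc_leI lam_le_iff lam_less_iff lam_surj)

lemma big_in: assumes ns: "numerical_semigroup L" and "lam L (kidx L) \<le> x" shows "x \<in> L"
proof -
  have "lam L (kidx L) = kidx L + genus L" using kidx_prop[OF ns] by simp
  then have "lam L (x - genus L) = x" using kidx_prop[OF ns, of "x - genus L"] assms by simp
  then show ?thesis using lam_in[OF ns] by metis
qed

lemma mem_Lsub: assumes ns: "numerical_semigroup L"
  shows "x \<in> Lsub L i \<longleftrightarrow> x \<in> L \<and> (x = 0 \<or> lam L i < x)"
proof
  assume x: "x \<in> Lsub L i"
  then have xL: "x \<in> L" by (simp add: Lsub_def)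
  then obtain m where m: "x = lam L m" using lam_surj[OF ns] by blast
  have "\<not> (1 \<le> m \<and> m \<le> i)" using x m unfolding Lsub_def by auto
  then have "m = 0 \<or> i < m" by auto
  then show "x \<in> L \<and> (x = 0 \<or> lam L i < x)"
    using xL m lam0[OF ns] lam_less_iff[OF ns] by auto
next
  assume x: "x \<in> L \<and> (x = 0 \<or> lam L i < x)"
  then obtain m where m: "x = lam L m" using lam_surj[OF ns] by blast
  have "m = 0 \<or> i < m" using x m lam0[OF ns] lam_less_iff[OF ns] lam_eq_iff[OF ns] by metis
  then have "\<forall>j. 1 \<le> j \<and> j \<le> i \<longrightarrow> x \<noteq> lam L j" using m lam_eq_iff[OF ns] by auto
  then show "x \<in> Lsub L i" using x unfolding Lsub_def by auto
qed

lemma gen_Lsub: assumes ns: "numerical_semigroup L" and "y \<in> L" "lam L i < y"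
  shows "is_generator (Lsub L i - X) y \<longleftrightarrow> y \<notin> X \<and>
    \<not> (\<exists>a b. a \<in> L \<and> b \<in> L \<and> lam L i < a \<and> lam L i < b \<and> a \<notin> X \<and> b \<notin> X \<and> a + b = y)"
proof -
  have key: "\<And>a. (a \<in> Lsub L i - X \<and> a \<noteq> 0) \<longleftrightarrow> (a \<in> L \<and> lam L i < a \<and> a \<notin> X)"
    using mem_Lsub[OF ns] by auto
  have "y \<in> Lsub L i - X \<longleftrightarrow> y \<notin> X" using mem_Lsub[OF ns] assms by auto
  moreover have "y \<noteq> 0" using assms by auto
  moreover have "(\<exists>a\<in>Lsub L i - X. \<exists>b\<in>Lsub L i - X. a \<noteq> 0 \<and> b \<noteq> 0 \<and> a + b = y)
     \<longleftrightarrow> (\<exists>a b. a \<in> L \<and> b \<in> L \<and> lam L i < a \<and> lam L i < b \<and> a \<notin> X \<and> b \<notin> X \<and> a + b = y)"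
    using key by blast
  ultimately show ?thesis unfolding is_generator_def by blast
qed


lemma Lt_inf: "numerical_semigroup L \<Longrightarrow> infinite (L - {a})"
  using ns_inf by simp

lemma lamLt_lo: assumes ns: "numerical_semigroup L" and j: "j < s"
  shows "lam (L - {lam L s}) j = lam L j"
proof -
  have "(L - {lam L s}) \<inter> {..<lam L j} = L \<inter> {..<lam L j}"
    using lam_less_iff[OF ns, of j s] j by auto
  moreover have "card (L \<inter> {..<lam L j}) = j" using enum_count[OF ns_inf[OF ns]] lam_def by simp
  moreover have "lam L j \<in> L - {lam L s}" using lam_in[OF ns] lam_eq_iff[OF ns] j by auto
  ultimately show ?thesis unfolding lam_def[of "L - {lam L s}"]
    by (intro enum_eqI Lt_inf ns) (auto simp: lam_def)
qed

lemma lamLt_hi: assumes ns: "numerical_semigroup L" and j: "s \<le> j"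
  shows "lam (L - {lam L s}) j = lam L (Suc j)"
proof -
  have "(L - {lam L s}) \<inter> {..<lam L (Suc j)} = (L \<inter> {..<lam L (Suc j)}) - {lam L s}"
    by auto
  moreover have "lam L s \<in> L \<inter> {..<lam L (Suc j)}"
    using lam_less_iff[OF ns, of s "Suc j"] j lam_in[OF ns] by auto
  moreover have "card (L \<inter> {..<lam L (Suc j)}) = Suc j" using enum_count[OF ns_inf[OF ns]] lam_def by simp
  moreover have "lam L (Suc j) \<in> L - {lam L s}" using lam_in[OF ns] lam_eq_iff[OF ns] j by auto
  ultimately show ?thesis unfolding lam_def[of "L - {lam L s}"]
    by (intro enum_eqI Lt_inf ns) (auto simp: lam_def)
qed

lemma genus_Lt: assumes ns: "numerical_semigroup L"
  shows "genus (L - {lam L s}) = Suc (genus L)"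
proof -
  have "UNIV - (L - {lam L s}) = insert (lam L s) (UNIV - L)" using lam_in[OF ns] by auto
  moreover have "finite (UNIV - L)" using ns numerical_semigroup_def by blast
  moreover have "lam L s \<notin> UNIV - L" using lam_in[OF ns] by simp
  ultimately show ?thesis unfolding genus_def by simp
qed

lemma kidx_Lt: assumes ns: "numerical_semigroup L" and s: "kidx L \<le> s"
  shows "kidx (L - {lam L s}) = s"
  unfolding kidx_def
proof (rule Least_equality)
  show "\<forall>i\<ge>s. lam (L - {lam L s}) i = i + genus (L - {lam L s})"
  proof (intro allI impI)
    fix i assume i: "s \<le> i"
    have "lam (L - {lam L s}) i = lam L (Suc i)" using lamLt_hi[OF ns i] .
    also have "\<dots> = Suc i + genus L" using kidx_prop[OF ns] s i by simp
    finally show "lam (L - {lam L s}) i = i + genus (L - {lam L s})" using genus_Lt[OF ns, of s] by simp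
  qed
next
  fix y assume y: "\<forall>i\<ge>y. lam (L - {lam L s}) i = i + genus (L - {lam L s})"
  show "s \<le> y"
  proof (rule ccontr)
    assume "\<not> s \<le> y"
    then have ys: "y \<le> s - 1" "s - 1 < s" by auto
    then have "lam L (s - 1) = s - 1 + Suc (genus L)"
      using y lamLt_lo[OF ns ys(2)] genus_Lt[OF ns] by metis
    moreover have "lam L (s - 1) < lam L s" using lam_less_iff[OF ns] ys by simp
    moreover have "lam L s = s + genus L" using kidx_prop[OF ns s] .
    ultimately show False using ys by simp
  qed
qed


theorem lemma2:
  fixes L :: "nat set" and s i t :: nat
  defines "k \<equiv> kidx L"
  defines "Lt \<equiv> L - {lam L s}"
  defines "C1 \<equiv> order_seed L i (lam L t)"
  defines "C2 \<equiv> i + 1 < k \<and> lam L t = lam L s + lam L (i + 1) - lam L i \<and> order_seed L (i + 1) (lam L s)"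
  defines "C3 \<equiv> i + 1 = k \<and> k + 1 = s \<and> lam L t = lam L s + lam L k - lam L (k - 1)"
  defines "C4 \<equiv> i + 1 = k \<and> k = s \<and> (lam L t = lam L s + lam L k - lam L (k - 1) \<or>
                  lam L t = lam L s + lam L k - lam L (k - 1) + 1)"
  assumes "numerical_semigroup L"
    and "s \<ge> k" and "order_seed L 0 (lam L s)"
    and "i < k" and "t > s"
  shows "(order_seed Lt i (lam L t) \<longleftrightarrow> C1 \<or> C2 \<or> C3 \<or> C4)
         \<and> \<not> (C1 \<and> C2) \<and> \<not> (C1 \<and> C3) \<and> \<not> (C1 \<and> C4)
         \<and> \<not> (C2 \<and> C3) \<and> \<not> (C2 \<and> C4) \<and> \<not> (C3 \<and> C4)"
proof -
  note ns = assms(7)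
  have sk: "k \<le> s" and ik: "i < k" and ts: "s < t" using assms by auto
  define g where "g = genus L"
  define c where "c = lam L k"
  define ls where "ls = lam L s"
  define li where "li = lam L i"
  define l1 where "l1 = lam L (Suc i)"
  define x where "x = lam L t"
  have lk: "\<And>j. k \<le> j \<Longrightarrow> lam L j = j + g" using kidx_prop[OF ns] k_def g_def by simp
  have cg: "c = k + g" using lk c_def by simp
  have lsg: "ls = s + g" using lk ls_def sk by simp
  have xg: "x = t + g" using lk x_def sk ts by simp
  have lic: "li < c" using lam_less_iff[OF ns] ik li_def c_def by simp
  have lil1: "li < l1" using lam_less_iff[OF ns] li_def l1_def by simp
  have big: "\<And>n. c \<le> n \<Longrightarrow> n \<in> L" using big_in[OF ns] c_def k_def by simp
  have bt: "\<And>a. a \<in> L \<Longrightarrow> li < a \<Longrightarrow> l1 \<le> a" using betw[OF ns] li_def l1_def by simp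
  have l1L: "l1 \<in> L" using lam_in[OF ns] l1_def by simp
  have xL: "x \<in> L" using lam_in[OF ns] x_def by simp
  have lsL: "ls \<in> L" using lam_in[OF ns] ls_def by simp
  have l1c: "Suc i \<le> k \<Longrightarrow> l1 \<le> c" using lam_le_iff[OF ns] l1_def c_def by simp
  have l1c': "Suc i < k \<Longrightarrow> l1 < c" using lam_less_iff[OF ns] l1_def c_def by simp
  have km1: "Suc i = k \<Longrightarrow> lam L (k - 1) = li" using li_def by (metis diff_Suc_1)
  have l1k: "Suc i = k \<Longrightarrow> l1 = c" using l1_def c_def by simp

  define E where "E = (\<exists>a b. a \<in> L \<and> b \<in> L \<and> li < a \<and> li < b \<and> a + b = x + li)"
  define E' where "E' = (\<exists>a b. a \<in> L \<and> b \<in> L \<and> li < a \<and> li < b \<and> a \<noteq> ls \<and> b \<noteq> ls \<and> a + b = x + li)"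

  have yL: "x + li \<in> L" using big xg cg lic sk ts by simp
  have yli: "li < x + li" using xg cg lic sk ts by simp

  have seedLt: "order_seed Lt i x \<longleftrightarrow> \<not> E'"
  proof -
    have kLt: "kidx Lt = s" using kidx_Lt[OF ns] sk k_def Lt_def by simp
    have liLt: "lam Lt i = li" using lamLt_lo[OF ns] ik sk Lt_def li_def by simp
    have "{lam Lt j |j. 1 \<le> j \<and> j \<le> i} = {lam L j |j. 1 \<le> j \<and> j \<le> i}"
      using lamLt_lo[OF ns] ik sk Lt_def by (metis (no_types, opaque_lifting) le_less_trans order_less_le_trans)
    then have subLt: "Lsub Lt i = Lsub L i - {ls}" unfolding Lsub_def Lt_def ls_def by auto
    have xLt: "lam Lt (t - 1) = x" using lamLt_hi[OF ns, of s "t - 1"] ts Lt_def x_def by simp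
    have ex: "\<exists>t'\<ge>kidx Lt. x = lam Lt t'" using xLt kLt ts by (intro exI[of _ "t - 1"]) auto
    have "order_seed Lt i x \<longleftrightarrow> is_generator (Lsub L i - {ls}) (x + li)"
      unfolding order_seed_def using ex kLt ik sk liLt subLt by auto
    also have "\<dots> \<longleftrightarrow> \<not> E'"
      using gen_Lsub[OF ns yL, of i "{ls}"] li_def E'_def xg lsg ts by auto
    finally show ?thesis .
  qed
  have seedL: "C1 \<longleftrightarrow> \<not> E"
  proof -
    have ex: "\<exists>t'\<ge>kidx L. x = lam L t'" using x_def k_def sk ts by (intro exI[of _ t]) auto
    have "C1 \<longleftrightarrow> is_generator (Lsub L i - {}) (x + li)"
      unfolding C1_def order_seed_def using ex ik k_def x_def li_def by auto
    also have "\<dots> \<longleftrightarrow> \<not> E"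
      using gen_Lsub[OF ns, of "x + li" i "{}"] yL yli unfolding li_def E_def by simp
    finally show ?thesis .
  qed
  have seed2: "Suc i < k \<Longrightarrow> order_seed L (Suc i) ls \<longleftrightarrow>
      \<not> (\<exists>a b. a \<in> L \<and> b \<in> L \<and> l1 < a \<and> l1 < b \<and> a + b = ls + l1)"
  proof -
    assume ik2: "Suc i < k"
    have ex: "\<exists>t'\<ge>kidx L. ls = lam L t'" using ls_def k_def sk by (intro exI[of _ s]) auto
    have yL2: "ls + l1 \<in> L" using big lsg cg sk by simp
    have y2: "l1 < ls + l1" using lsg cg sk l1c' ik2 by simp
    have "order_seed L (Suc i) ls \<longleftrightarrow> is_generator (Lsub L (Suc i) - {}) (ls + l1)"
      unfolding order_seed_def using ex ik2 k_def l1_def by auto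
    also have "\<dots> \<longleftrightarrow> \<not> (\<exists>a b. a \<in> L \<and> b \<in> L \<and> l1 < a \<and> l1 < b \<and> a + b = ls + l1)"
      using gen_Lsub[OF ns yL2, of "Suc i" "{}"] y2 l1_def by auto
    finally show ?thesis .
  qed
  have C2': "C2 \<longleftrightarrow> Suc i < k \<and> x = ls + l1 - li \<and>
      \<not> (\<exists>a b. a \<in> L \<and> b \<in> L \<and> l1 < a \<and> l1 < b \<and> a + b = ls + l1)"
    unfolding C2_def using seed2 x_def ls_def l1_def li_def by auto
  have C3': "C3 \<longleftrightarrow> Suc i = k \<and> k + 1 = s \<and> x = ls + c - li"
    unfolding C3_def using km1 x_def ls_def c_def by auto
  have C4': "C4 \<longleftrightarrow> Suc i = k \<and> k = s \<and> (x = ls + c - li \<or> x = ls + c - li + 1)"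
    unfolding C4_def using km1 x_def ls_def c_def by auto

  have EE: "E' \<Longrightarrow> E" unfolding E_def E'_def by blast
  have Eof: "C2 \<or> C3 \<or> C4 \<Longrightarrow> E"
  proof -
    assume h: "C2 \<or> C3 \<or> C4"
    then obtain b where b: "b \<in> L" "li < b" "ls + b = x + li"
    proof (elim disjE)
      assume "C2" then show ?thesis using that[of l1] C2' l1L lil1 lsg cg sk l1c' by auto
    next
      assume "C3" then show ?thesis using that[of c] C3' big lic lsg cg by auto
    next
      assume "C4" then show ?thesis using that[of c] that[of "Suc c"] C4' big lic lsg cg by auto
    qed
    have "li < ls" using lic lsg cg sk by simp
    then show E unfolding E_def using b lsL by blast
  qed

  have fwd: "\<not> E' \<Longrightarrow> C1 \<or> C2 \<or> C3 \<or> C4"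
  proof -
    assume nE': "\<not> E'"
    show ?thesis
    proof (cases E)
      case False then show ?thesis using seedL by simp
    next
      case True
      then obtain a b where ab: "a \<in> L" "b \<in> L" "li < a" "li < b" "a + b = x + li" unfolding E_def by blast
      obtain b0 where b0: "b0 \<in> L" "li < b0" "ls + b0 = x + li"
      proof (cases "a = ls")
        case True then show ?thesis using that[of b] ab by auto
      next
        case False
        then have "b = ls" using nE' ab unfolding E'_def by blast
        then show ?thesis using that[of a] ab by auto
      qed
      have b0l1: "l1 \<le> b0" using bt b0 by simp
      show ?thesis
      proof (cases "Suc i < k")
        case True
        have l1c2: "l1 < c" using l1c' True .
        have b0eq: "b0 = l1"
        proof (rule ccontr)
          assume "b0 \<noteq> l1"
          then have "l1 < b0" using b0l1 by simp
          then have "x + li - l1 \<in> L" "ls < x + li - l1" using big b0 lsg cg sk by auto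
          then have E' unfolding E'_def using l1L lil1 l1c2 lsg cg sk b0 lic
            by (intro exI[of _ l1] exI[of _ "x + li - l1"]) auto
          then show False using nE' by simp
        qed
        have nd: "\<not> (\<exists>a b. a \<in> L \<and> b \<in> L \<and> l1 < a \<and> l1 < b \<and> a + b = ls + l1)"
        proof
          assume "\<exists>a b. a \<in> L \<and> b \<in> L \<and> l1 < a \<and> l1 < b \<and> a + b = ls + l1"
          then obtain a' b' where h: "a' \<in> L" "b' \<in> L" "l1 < a'" "l1 < b'" "a' + b' = ls + l1" by blast
          then have "a' \<noteq> ls" "b' \<noteq> ls" by auto
          then have E' unfolding E'_def using h lil1 b0 b0eq
            by (intro exI[of _ a'] exI[of _ b']) auto
          then show False using nE' by simp
        qed
        have "x = ls + l1 - li" using b0 b0eq by simp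
        then show ?thesis using C2' True nd by simp
      next
        case False
        then have ik1: "Suc i = k" using ik by simp
        then have l1c2: "l1 = c" using l1k by simp
        show ?thesis
        proof (cases "s = k")
          case True
          then have lsc: "ls = c" using lsg cg by simp
          have "b0 \<le> Suc c"
          proof (rule ccontr)
            assume "\<not> b0 \<le> Suc c"
            then have "Suc c \<in> L" "b0 - 1 \<in> L" using big by auto
            then have E' unfolding E'_def using lsc b0 lic \<open>\<not> b0 \<le> Suc c\<close>
              by (intro exI[of _ "Suc c"] exI[of _ "b0 - 1"]) auto
            then show False using nE' by simp
          qed
          then have "b0 = c \<or> b0 = Suc c" using b0l1 l1c2 by auto
          then have "x = ls + c - li \<or> x = ls + c - li + 1" using b0 lsc lic by auto
          then show ?thesis using C4' ik1 True by simp
        next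
          case False
          then have sk1: "k < s" using sk by simp
          have b0c: "b0 = c"
          proof (rule ccontr)
            assume "b0 \<noteq> c"
            then have "c < b0" using b0l1 l1c2 by simp
            then have "x + li - c \<in> L" "ls < x + li - c" using big b0 lsg cg sk by auto
            then have E' unfolding E'_def using big[of c] lic lsg cg sk1 b0
              by (intro exI[of _ c] exI[of _ "x + li - c"]) auto
            then show False using nE' by simp
          qed
          have "s = k + 1"
          proof (rule ccontr)
            assume "s \<noteq> k + 1"
            then have "Suc c < ls" using sk1 lsg cg by simp
            then have "Suc c \<in> L" "ls - 1 \<in> L" using big by auto
            then have E' unfolding E'_def using b0 b0c lic \<open>Suc c < ls\<close>
              by (intro exI[of _ "Suc c"] exI[of _ "ls - 1"]) auto
            then show False using nE' by simp
          qed
          moreover have "x = ls + c - li" using b0 b0c by simp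
          ultimately show ?thesis using C3' ik1 by simp
        qed
      qed
    qed
  qed

  have bwd: "C1 \<or> C2 \<or> C3 \<or> C4 \<Longrightarrow> \<not> E'"
  proof -
    assume h: "C1 \<or> C2 \<or> C3 \<or> C4"
    show "\<not> E'"
    proof
      assume E'
      then obtain a b where ab: "a \<in> L" "b \<in> L" "li < a" "li < b" "a \<noteq> ls" "b \<noteq> ls" "a + b = x + li"
        unfolding E'_def by blast
      have al1: "l1 \<le> a" "l1 \<le> b" using bt ab by auto
      from h show False
      proof (elim disjE)
        assume C1 then show False using seedL EE \<open>E'\<close> by simp
      next
        assume C2
        then have c2: "Suc i < k" "x = ls + l1 - li"
          "\<not> (\<exists>a b. a \<in> L \<and> b \<in> L \<and> l1 < a \<and> l1 < b \<and> a + b = ls + l1)" using C2' by auto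
        have s2: "a + b = ls + l1" using c2 ab lil1 by simp
        show False
        proof (cases "l1 < a \<and> l1 < b")
          case True then show False using c2(3) ab s2 by blast
        next
          case False
          then have "a = l1 \<or> b = l1" using al1 by auto
          then show False using s2 ab by auto
        qed
      next
        assume C3
        then have "Suc i = k" "s = k + 1" "x = ls + c - li" using C3' by auto
        then have "ls = Suc c" "l1 = c" "a + b = 2 * c + 1" using lsg cg ab lic l1k by auto
        then show False using al1 ab by linarith
      next
        assume C4
        then have "Suc i = k" "s = k" "x = ls + c - li \<or> x = ls + c - li + 1" using C4' by auto
        then have "ls = c" "l1 = c" "a + b \<le> 2 * c + 1" using lsg cg ab lic l1k by auto
        then show False using al1 ab by linarith
      qed
    qed
  qed

  have main: "order_seed Lt i (lam L t) \<longleftrightarrow> C1 \<or> C2 \<or> C3 \<or> C4"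
    using seedLt fwd bwd x_def by blast
  have ex: "\<not> (C1 \<and> C2) \<and> \<not> (C1 \<and> C3) \<and> \<not> (C1 \<and> C4)"
    using seedL Eof by blast
  have ex2: "\<not> (C2 \<and> C3) \<and> \<not> (C2 \<and> C4) \<and> \<not> (C3 \<and> C4)"
    using C2' C3' C4' by auto
  show ?thesis using main ex ex2 by blast
qed

end
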